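(* In the reward setting described in the context, for every choice of $\bar d\le D/2$ there is an instance (whose second largest expected delay is $\bar d$) for which every algorithm has pseudo-regret $\Omega(\bar d)$.
   Context: Delay-as-payoff bandit: there are $K$ arms, a horizon $T$ and a maximum delay $D$. Each arm $i$ has a distribution $\mathcal{D}_i$ on $\{0,1,\dots,D\}$; at each step $t$ the agent chooses $i_t$ based on observed feedback, a delay $d_t\sim\mathcal{D}_{i_t}$ is drawn independently and revealed only at time $t+d_t$; the payoff is the reward $r_t=d_t/D$, to be maximized. Let $\mu(i)=\mathbb{E}_{X\sim\mathcal{D}_i}[X/D]$, $d(i)=D\mu(i)$, $\mu^*=\max_i\mu(i)$, and $\bar d$ the second largest value among $d(1),\dots,d(K)$. Pseudo-regret: $T\mu^*-\mathbb{E}[\sum_{t=1}^T r_t]$. *)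

theory Defs
  imports "HOL-Probability.Probability"
begin

text \<open>Delay-as-payoff bandit. Arms are indexed by 0..K-1, rounds by 0..T-1.
  An instance is a family of delay distributions P :: nat \<Rightarrow> nat pmf
  (only arms i < K are relevant).\<close>

definition valid_instance :: "nat \<Rightarrow> nat \<Rightarrow> (nat \<Rightarrow> nat pmf) \<Rightarrow> bool" where
  "valid_instance K D P \<longleftrightarrow> (\<forall>i<K. set_pmf (P i) \<subseteq> {..D})"

definition mean_delay :: "(nat \<Rightarrow> nat pmf) \<Rightarrow> nat \<Rightarrow> real" where
  "mean_delay P i = measure_pmf.expectation (P i) real"

definition mu :: "nat \<Rightarrow> (nat \<Rightarrow> nat pmf) \<Rightarrow> nat \<Rightarrow> real" where
  "mu D P i = measure_pmf.expectation (P i) (\<lambda>x. real x / real D)"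

definition mu_star :: "nat \<Rightarrow> nat \<Rightarrow> (nat \<Rightarrow> nat pmf) \<Rightarrow> real" where
  "mu_star K D P = Max ((mu D P) ` {..<K})"

definition second_largest :: "nat \<Rightarrow> (nat \<Rightarrow> real) \<Rightarrow> real" where
  "second_largest K f = sort (map f [0..<K]) ! (K - 2)"

text \<open>A history is the list of (arm pulled, realised delay) for rounds 0..t-1.
  What the agent observes before choosing in round t: for each past round s < t
  the arm it pulled, and the delay d_s if it has been revealed, i.e. s + d_s \<le> t.\<close>
definition observe :: "nat \<Rightarrow> (nat \<times> nat) list \<Rightarrow> (nat \<times> nat option) list" where
  "observe t h = map (\<lambda>(s, (i, d)). (i, if s + d \<le> t then Some d else None))
                   (zip [0..<length h] h)"

text \<open>A (possibly randomised) algorithm: in round t, given the observations,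
  a distribution over arms.\<close>
type_synonym policy = "nat \<Rightarrow> (nat \<times> nat option) list \<Rightarrow> nat pmf"

definition valid_policy :: "nat \<Rightarrow> policy \<Rightarrow> bool" where
  "valid_policy K pol \<longleftrightarrow> (\<forall>t obs. set_pmf (pol t obs) \<subseteq> {..<K})"

primrec run :: "policy \<Rightarrow> (nat \<Rightarrow> nat pmf) \<Rightarrow> nat \<Rightarrow> (nat \<times> nat) list pmf" where
  "run pol P 0 = return_pmf []"
| "run pol P (Suc t) =
     bind_pmf (run pol P t) (\<lambda>h.
       bind_pmf (pol t (observe t h)) (\<lambda>i.
         map_pmf (\<lambda>d. h @ [(i, d)]) (P i)))"

definition total_reward :: "nat \<Rightarrow> (nat \<times> nat) list \<Rightarrow> real" where
  "total_reward D h = sum_list (map (\<lambda>(i, d). real d / real D) h)"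

definition pseudo_regret :: "nat \<Rightarrow> nat \<Rightarrow> nat \<Rightarrow> (nat \<Rightarrow> nat pmf) \<Rightarrow> policy \<Rightarrow> real" where
  "pseudo_regret K D T P pol =
     real T * mu_star K D P - measure_pmf.expectation (run pol P T) (total_reward D)"

end

theory Submission
  imports Defs
begin

lemma exp_bind_fin:
  fixes h :: "'b \<Rightarrow> real"
  assumes "finite (set_pmf p)" "\<And>x. x \<in> set_pmf p \<Longrightarrow> finite (set_pmf (f x))"
  shows "measure_pmf.expectation (bind_pmf p f) h =
         measure_pmf.expectation p (\<lambda>x. measure_pmf.expectation (f x) h)"
  using assms
  by (subst pmf_expectation_bind[of "set_pmf p"], simp_all,
      subst integral_measure_pmf[of "set_pmf p"], auto)

lemma run_support:
  "h \<in> set_pmf (run pol P t) \<Longrightarrow> length h = t \<and> (\<forall>x\<in>set h. snd x \<in> set_pmf (P (fst x)))"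
  by (induction t arbitrary: h) fastforce+

lemma run_support_K:
  assumes "valid_policy K pol"
  shows "\<forall>h\<in>set_pmf (run pol P t). \<forall>x\<in>set h. fst x < K"
proof (induction t)
  case 0 then show ?case by simp
next
  case (Suc t)
  then show ?case using assms unfolding valid_policy_def by (auto simp: subset_iff)
qed

lemma run_finite:
  assumes "valid_policy K pol" "\<And>i. finite (set_pmf (P i))"
  shows "finite (set_pmf (run pol P t))"
proof (induction t)
  case 0 then show ?case by simp
next
  case (Suc t)
  have fp: "finite (set_pmf (pol t obs))" for obs
    using assms(1) unfolding valid_policy_def by (meson finite_lessThan finite_subset)
  show ?case using Suc fp assms(2) by simp
qed

primrec blind :: "policy \<Rightarrow> nat \<Rightarrow> nat list pmf" where
  "blind pol 0 = return_pmf []"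
| "blind pol (Suc t) = bind_pmf (blind pol t) (\<lambda>as.
     map_pmf (\<lambda>i. as @ [i]) (pol t (map (\<lambda>i. (i, None)) as)))"

lemma observe_blind:
  assumes "length h = t" "\<forall>x\<in>set h. m \<le> snd x" "t = 0 \<or> t < m"
  shows "observe t h = map (\<lambda>i. (i, None)) (map fst h)"
proof (cases "t = 0")
  case True then show ?thesis using assms by (simp add: observe_def)
next
  case False
  then have tm: "t < m" using assms by auto
  show ?thesis unfolding observe_def
  proof (rule nth_equalityI)
    fix i assume "i < length (map (\<lambda>(s, i, d). (i, if s + d \<le> t then Some d else None)) (zip [0..<length h] h))"
    then have i: "i < length h" by simp
    then have "m \<le> snd (h ! i)" using assms(2) nth_mem by blast
    then show "map (\<lambda>(s, i, d). (i, if s + d \<le> t then Some d else None)) (zip [0..<length h] h) ! i =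
        map (\<lambda>i. (i, None)) (map fst h) ! i"
      using i tm by (cases "h ! i") (auto simp: nth_zip)
  qed simp
qed

lemma run_blind:
  assumes "\<And>i. set_pmf (P i) \<subseteq> {m..}"
  shows "t \<le> max 1 m \<Longrightarrow> map_pmf (map fst) (run pol P t) = blind pol t"
proof (induction t)
  case 0 then show ?case by simp
next
  case (Suc t)
  have c: "t = 0 \<or> t < m" using Suc.prems by auto
  have "map_pmf (map fst) (run pol P (Suc t)) =
     bind_pmf (run pol P t) (\<lambda>h. map_pmf (\<lambda>i. map fst h @ [i]) (pol t (map (\<lambda>i. (i, None)) (map fst h))))"
  proof -
    have eq: "map_pmf (map fst) (pol t (observe t h) \<bind> (\<lambda>i. map_pmf (\<lambda>d. h @ [(i, d)]) (P i))) =
       map_pmf (\<lambda>i. map fst h @ [i]) (pol t (map (\<lambda>i. (i, None)) (map fst h)))"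
      if h: "h \<in> set_pmf (run pol P t)" for h
    proof -
      have "observe t h = map (\<lambda>i. (i, None)) (map fst h)"
        using run_support[OF h] assms c
        by (intro observe_blind[where m=m]) force+
      then show ?thesis
        by (simp add: map_bind_pmf map_pmf_comp map_pmf_def[symmetric] bind_return_pmf)
    qed
    show ?thesis
      by (simp only: run.simps map_bind_pmf[of "map fst" "run pol P t"]) (rule bind_pmf_cong[OF refl], rule eq)
  qed
  also have "\<dots> = bind_pmf (map_pmf (map fst) (run pol P t)) (\<lambda>as. map_pmf (\<lambda>i. as @ [i]) (pol t (map (\<lambda>i. (i, None)) as)))"
    by (simp add: bind_map_pmf)
  also have "\<dots> = blind pol (Suc t)" using Suc by simp
  finally show ?case .
qed

lemma run_take:
  "w \<le> T \<Longrightarrow> map_pmf (take w) (run pol P T) = run pol P w"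
proof (induction T)
  case 0 then show ?case by simp
next
  case (Suc T)
  show ?case
  proof (cases "w = Suc T")
    case True
    then show ?thesis
      by (subst map_pmf_cong[where g=id]) (auto dest: run_support)
  next
    case False
    then have w: "w \<le> T" using Suc by simp
    have eq: "map_pmf (take w) (pol T (observe T h) \<bind> (\<lambda>i. map_pmf (\<lambda>d. h @ [(i, d)]) (P i))) =
          return_pmf (take w h)" if "h \<in> set_pmf (run pol P T)" for h
    proof -
      have "length h = T" using that by (auto dest: run_support)
      then show ?thesis using w
        by (simp add: map_bind_pmf map_pmf_comp map_pmf_def bind_return_pmf bind_assoc_pmf bind_pmf_const)
    qed
    have "map_pmf (take w) (run pol P (Suc T)) = map_pmf (take w) (run pol P T)"
      by (simp only: run.simps map_bind_pmf[of "take w" "run pol P T"] map_pmf_def[of "take w" "run pol P T"])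
        (rule bind_pmf_cong[OF refl], rule eq)
    then show ?thesis using Suc w by simp
  qed
qed

lemma exp_add_const:
  fixes f :: "'a \<Rightarrow> real"
  assumes "finite (set_pmf p)"
  shows "measure_pmf.expectation p (\<lambda>x. c + f x) = c + measure_pmf.expectation p f"
  using assms by (simp add: integrable_measure_pmf_finite)

lemma run_step:
  fixes F :: "(nat \<times> nat) list \<Rightarrow> real"
  assumes "valid_policy K pol" "\<And>i. finite (set_pmf (P i))"
  shows "measure_pmf.expectation (run pol P (Suc t)) F =
    measure_pmf.expectation (run pol P t) (\<lambda>h. measure_pmf.expectation (pol t (observe t h))
       (\<lambda>i. measure_pmf.expectation (P i) (\<lambda>d. F (h @ [(i, d)]))))"
proof -
  have fp: "finite (set_pmf (pol t obs))" for t obs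
    using assms(1) unfolding valid_policy_def by (meson finite_lessThan finite_subset)
  show ?thesis
    unfolding run.simps
    apply (subst exp_bind_fin)
      apply (rule run_finite[OF assms])
     apply (simp add: fp assms(2))
    apply (rule Bochner_Integration.integral_cong[OF refl])
    apply (subst exp_bind_fin)
      apply (simp add: fp)
     apply (simp add: assms(2))
    apply simp
    done
qed

lemma mu_alt: "mu D P i = measure_pmf.expectation (P i) real / real D"
  unfolding mu_def by simp

lemma mu_fun: "mu D P = (\<lambda>i. measure_pmf.expectation (P i) real / real D)"
  by (rule ext, rule mu_alt)

lemma reward_eq:
  assumes "valid_policy K pol" "\<And>i. set_pmf (P i) \<subseteq> {..D}"
  shows "measure_pmf.expectation (run pol P t) (total_reward D) =
         measure_pmf.expectation (run pol P t) (\<lambda>h. sum_list (map (\<lambda>(i, d). mu D P i) h))"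
proof (induction t)
  case 0 then show ?case by (simp add: total_reward_def)
next
  case (Suc t)
  have fP: "finite (set_pmf (P i))" for i using assms(2) by (meson finite_atMost finite_subset)
  have fp: "finite (set_pmf (pol t obs))" for t obs
    using assms(1) unfolding valid_policy_def by (meson finite_lessThan finite_subset)
  have fr: "finite (set_pmf (run pol P t))" by (rule run_finite[OF assms(1) fP])
  let ?g = "\<lambda>h. sum_list (map (\<lambda>(i, d). mu D P i) h)"
  let ?X = "\<lambda>h. measure_pmf.expectation (pol t (observe t h)) (mu D P)"
  have "measure_pmf.expectation (run pol P (Suc t)) (total_reward D) =
        measure_pmf.expectation (run pol P t) (\<lambda>h. total_reward D h + ?X h)"
    apply (subst run_step[OF assms(1) fP])
    apply (rule Bochner_Integration.integral_cong[OF refl])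
    apply (simp add: total_reward_def exp_add_const fP fp mu_fun)
    done
  also have "\<dots> = measure_pmf.expectation (run pol P t) (total_reward D) +
        measure_pmf.expectation (run pol P t) ?X"
    by (rule Bochner_Integration.integral_add) (simp_all add: integrable_measure_pmf_finite fr)
  also have "\<dots> = measure_pmf.expectation (run pol P t) ?g +
        measure_pmf.expectation (run pol P t) ?X" using Suc by simp
  also have "\<dots> = measure_pmf.expectation (run pol P t) (\<lambda>h. ?g h + ?X h)"
    by (rule Bochner_Integration.integral_add[symmetric]) (simp_all add: integrable_measure_pmf_finite fr)
  also have "\<dots> = measure_pmf.expectation (run pol P (Suc t)) ?g"
    apply (subst run_step[OF assms(1) fP])
    apply (rule Bochner_Integration.integral_cong[OF refl])
    apply (simp add: exp_add_const fP fp)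
    done
  finally show ?case .
qed

definition inst :: "nat \<Rightarrow> real \<Rightarrow> nat \<Rightarrow> nat \<Rightarrow> nat pmf" where
  "inst D dbar a = (\<lambda>i. if i = a then return_pmf D else
     map_pmf (\<lambda>b. if b then nat \<lfloor>dbar\<rfloor> + 1 else nat \<lfloor>dbar\<rfloor>) (bernoulli_pmf (dbar - of_int \<lfloor>dbar\<rfloor>)))"

lemma floor_facts:
  assumes "0 < D" "0 \<le> dbar" "dbar \<le> real D / 2"
  shows "nat \<lfloor>dbar\<rfloor> + 1 \<le> D" "real (nat \<lfloor>dbar\<rfloor>) = of_int \<lfloor>dbar\<rfloor>"
    "nat \<lfloor>dbar\<rfloor> \<le> D"
proof -
  have a: "real (nat \<lfloor>dbar\<rfloor>) = of_int \<lfloor>dbar\<rfloor>" using assms by simp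
  have "of_int \<lfloor>dbar\<rfloor> \<le> dbar" by simp
  then have b: "2 * nat \<lfloor>dbar\<rfloor> \<le> D" using assms a by linarith
  show "nat \<lfloor>dbar\<rfloor> + 1 \<le> D" using b assms(1) by linarith
  show "real (nat \<lfloor>dbar\<rfloor>) = of_int \<lfloor>dbar\<rfloor>" by (rule a)
  show "nat \<lfloor>dbar\<rfloor> \<le> D" using b by linarith
qed

lemma inst_support:
  assumes "0 < D" "0 \<le> dbar" "dbar \<le> real D / 2"
  shows "set_pmf (inst D dbar a i) \<subseteq> {nat \<lfloor>dbar\<rfloor>..D}"
  using floor_facts[OF assms] by (auto simp: inst_def)

lemma inst_mean:
  assumes "0 < D" "0 \<le> dbar" "dbar \<le> real D / 2"
  shows "mean_delay (inst D dbar a) i = (if i = a then real D else dbar)"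
proof -
  have p: "0 \<le> dbar - of_int \<lfloor>dbar\<rfloor>" "dbar - of_int \<lfloor>dbar\<rfloor> \<le> 1" by linarith+
  define m where "m = nat \<lfloor>dbar\<rfloor>"
  have mm: "real m = of_int \<lfloor>dbar\<rfloor>" using floor_facts(2)[OF assms] m_def by simp
  have "measure_pmf.expectation (map_pmf (\<lambda>b. if b then m + 1 else m) (bernoulli_pmf (dbar - of_int \<lfloor>dbar\<rfloor>))) real
     = real (m + 1) * (dbar - of_int \<lfloor>dbar\<rfloor>) + real m * (1 - (dbar - of_int \<lfloor>dbar\<rfloor>))"
    using p by simp
  also have "\<dots> = dbar" using mm by (simp add: algebra_simps)
  finally have e: "measure_pmf.expectation (map_pmf (\<lambda>b. if b then m + 1 else m) (bernoulli_pmf (dbar - of_int \<lfloor>dbar\<rfloor>))) real = dbar" .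
  show ?thesis
    using e unfolding inst_def mean_delay_def m_def by simp
qed

lemma inst_mu:
  assumes "0 < D" "0 \<le> dbar" "dbar \<le> real D / 2"
  shows "mu D (inst D dbar a) i = (if i = a then 1 else dbar / real D)"
  using inst_mean[OF assms, of a i] assms(1) by (simp add: mu_alt mean_delay_def)

lemma inst_mu_star:
  assumes "0 < D" "0 \<le> dbar" "dbar \<le> real D / 2" "a < K"
  shows "mu_star K D (inst D dbar a) = 1"
  unfolding mu_star_def
proof (rule Max_eqI)
  show "finite (mu D (inst D dbar a) ` {..<K})" by simp
  show "1 \<in> mu D (inst D dbar a) ` {..<K}"
    using assms(4) inst_mu[OF assms(1-3), of a a] by force
  fix y assume "y \<in> mu D (inst D dbar a) ` {..<K}"
  then show "y \<le> 1" using inst_mu[OF assms(1-3)] assms by (auto simp: field_simps)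
qed

lemma inst_second:
  assumes "0 < D" "0 \<le> dbar" "dbar \<le> real D / 2" "a < K" "2 \<le> K"
  shows "second_largest K (mean_delay (inst D dbar a)) = dbar"
proof -
  let ?f = "\<lambda>i. if i = a then real D else dbar"
  have mf: "mean_delay (inst D dbar a) = ?f" using inst_mean[OF assms(1-3)] by (rule ext)
  have up: "[0..<K] = [0..<a] @ [a] @ [Suc a..<K]"
  proof -
    have "[0..<K] = [0..<a] @ [a..<K]" using upt_add_eq_append[of 0 a "K-a"] assms(4) by simp
    also have "[a..<K] = a # [Suc a..<K]" using assms(4) by (simp add: upt_conv_Cons)
    finally show ?thesis by simp
  qed
  have m1: "map ?f [0..<a] = replicate a dbar"
    by (rule nth_equalityI) auto
  have m2: "map ?f [Suc a..<K] = replicate (K - Suc a) dbar"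
    by (rule nth_equalityI) auto
  have ms: "mset (replicate (K - 1) dbar @ [real D]) = mset (map ?f [0..<K])"
  proof -
    have k: "K - 1 = a + (K - Suc a)" using assms(4) by simp
    have "replicate (K - 1) dbar = replicate a dbar @ replicate (K - Suc a) dbar"
      unfolding k by (rule replicate_add)
    then show ?thesis unfolding up by (simp add: m1 m2)
  qed
  have le: "dbar \<le> real D" using assms by simp
  have so: "sorted (replicate (K - 1) dbar @ [real D])"
    using le by (auto simp: sorted_append)
  have "sort (map ?f [0..<K]) = replicate (K - 1) dbar @ [real D]"
    by (rule properties_for_sort[OF ms so])
  moreover have "K - 2 < K - 1" using assms(5) by simp
  ultimately show ?thesis unfolding second_largest_def mf
    by (simp add: nth_append)
qed

definition cntn :: "nat \<Rightarrow> nat list \<Rightarrow> nat" where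
  "cntn a xs = length (filter (\<lambda>i. i \<noteq> a) xs)"

lemma path_bound0:
  assumes "\<And>i. mu' i \<le> (if i = a then 1 else 1/2)"
  shows "sum_list (map mu' xs) \<le> real (length xs) - real (cntn a xs) / 2"
proof (induction xs)
  case Nil then show ?case by (simp add: cntn_def)
next
  case (Cons i xs)
  have "mu' i \<le> (if i = a then 1 else 1/2)" by (rule assms)
  show ?case
  proof (cases "i = a")
    case True then show ?thesis using Cons.IH assms[of i] by (simp add: cntn_def)
  next
    case False
    then have m: "mu' i \<le> 1/2" using assms[of i] by simp
    have c: "real (cntn a (i # xs)) = 1 + real (cntn a xs)" using False by (simp add: cntn_def)
    have "sum_list (map mu' (i # xs)) = mu' i + sum_list (map mu' xs)" by simp
    moreover have "real (length (i # xs)) = 1 + real (length xs)" by simp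
    ultimately show ?thesis using Cons.IH m c by (simp only:) (simp add: field_simps)
  qed
qed

lemma path_bound:
  assumes "\<And>i. mu' i \<le> (if i = a then 1 else 1/2)"
  shows "sum_list (map (\<lambda>(i, d). mu' i) h) \<le> real (length h) - real (cntn a (map fst h)) / 2"
proof -
  have e: "map (\<lambda>(i, d). mu' i) h = map mu' (map fst h)" by (induction h) auto
  show ?thesis unfolding e using path_bound0[OF assms, of "map fst h"] by simp
qed

lemma cntn_take: "cntn a (take w xs) \<le> cntn a xs"
proof -
  have "cntn a xs = cntn a (take w xs) + cntn a (drop w xs)"
    unfolding cntn_def by (metis append_take_drop_id filter_append length_append)
  then show ?thesis by simp
qed

lemma cntn01: "length xs \<le> cntn 0 xs + cntn 1 xs"
  by (induction xs) (auto simp: cntn_def)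

lemma regret_bound:
  assumes vp: "valid_policy K pol" and aK: "a < K" and D: "0 < D" "0 \<le> dbar" "dbar \<le> real D / 2"
    and wT: "w \<le> T"
    and half: "real w / 2 \<le> measure_pmf.expectation (run pol (inst D dbar a) w) (\<lambda>h. real (cntn a (map fst h)))"
  shows "real w / 4 \<le> pseudo_regret K D T (inst D dbar a) pol"
proof -
  let ?P = "inst D dbar a"
  have supp: "set_pmf (?P i) \<subseteq> {..D}" for i using inst_support[OF D, of a i] by auto
  have fP: "finite (set_pmf (?P i))" for i using supp by (meson finite_atMost finite_subset)
  have fr: "finite (set_pmf (run pol ?P t))" for t by (rule run_finite[OF vp fP])
  let ?g = "\<lambda>h. sum_list (map (\<lambda>(i, d). mu D ?P i) h)"
  have e1: "measure_pmf.expectation (run pol ?P T) (total_reward D) =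
        measure_pmf.expectation (run pol ?P T) ?g" by (rule reward_eq[OF vp supp])
  have mub: "mu D ?P i \<le> (if i = a then 1 else 1/2)" for i
    using inst_mu[OF D, of a i] D by (auto simp: field_simps)
  have "measure_pmf.expectation (run pol ?P T) ?g \<le>
        measure_pmf.expectation (run pol ?P T) (\<lambda>h. real T - real (cntn a (map fst (take w h))) / 2)"
  proof (rule integral_mono_AE)
    show "integrable (measure_pmf (run pol ?P T)) ?g" by (simp add: integrable_measure_pmf_finite fr)
    show "integrable (measure_pmf (run pol ?P T)) (\<lambda>h. real T - real (cntn a (map fst (take w h))) / 2)"
      by (simp add: integrable_measure_pmf_finite fr)
    show "AE h in measure_pmf (run pol ?P T). ?g h \<le> real T - real (cntn a (map fst (take w h))) / 2"
      unfolding AE_measure_pmf_iff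
    proof
      fix h assume "h \<in> set_pmf (run pol ?P T)"
      then have l: "length h = T" by (auto dest: run_support)
      have "cntn a (map fst (take w h)) \<le> cntn a (map fst h)"
        using cntn_take[of a w "map fst h"] by (simp add: take_map)
      then show "?g h \<le> real T - real (cntn a (map fst (take w h))) / 2"
        using path_bound[of "mu D ?P" a h, OF mub] l by simp
    qed
  qed
  also have "\<dots> = real T - measure_pmf.expectation (run pol ?P T) (\<lambda>h. real (cntn a (map fst (take w h)))) / 2"
    by (simp add: integrable_measure_pmf_finite fr Bochner_Integration.integral_diff)
  also have "measure_pmf.expectation (run pol ?P T) (\<lambda>h. real (cntn a (map fst (take w h)))) =
       measure_pmf.expectation (map_pmf (take w) (run pol ?P T)) (\<lambda>h. real (cntn a (map fst h)))"
    by simp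
  also have "\<dots> = measure_pmf.expectation (run pol ?P w) (\<lambda>h. real (cntn a (map fst h)))"
    by (simp only: run_take[OF wT])
  finally have "measure_pmf.expectation (run pol ?P T) (total_reward D) \<le> real T - real w / 4"
    using e1 half by linarith
  then show ?thesis
    unfolding pseudo_regret_def using inst_mu_star[OF D aK] by simp
qed

lemma exists_arm:
  assumes vp: "valid_policy K pol" and K: "2 \<le> K" and D: "0 < D" "0 \<le> dbar" "dbar \<le> real D / 2"
    and T: "0 < T" "dbar \<le> real T"
  shows "\<exists>a<K. dbar / 8 \<le> pseudo_regret K D T (inst D dbar a) pol"
proof -
  define m where "m = nat \<lfloor>dbar\<rfloor>"
  define w where "w = max 1 m"
  have mr: "real m = of_int \<lfloor>dbar\<rfloor>" using D m_def by simp
  have "of_int \<lfloor>dbar\<rfloor> \<le> dbar" by simp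
  then have "real m \<le> real T" using mr T by linarith
  then have wT: "w \<le> T" using T unfolding w_def by simp
  have wd: "dbar / 2 \<le> real w"
  proof (cases "dbar < 1")
    case True then show ?thesis unfolding w_def by simp
  next
    case False
    have "dbar < of_int \<lfloor>dbar\<rfloor> + 1" by linarith
    have f1: "1 \<le> \<lfloor>dbar\<rfloor>" using False by (simp add: le_floor_iff)
    then have "dbar < real m + 1" "1 \<le> real m" using mr by linarith+
    then show ?thesis unfolding w_def by simp
  qed
  have supm: "set_pmf (inst D dbar a i) \<subseteq> {m..}" for a i
    using inst_support[OF D, of a i] m_def by auto
  have supD: "set_pmf (inst D dbar a i) \<subseteq> {..D}" for a i
    using inst_support[OF D, of a i] by auto
  have hb: "map_pmf (map fst) (run pol (inst D dbar a) w) = blind pol w" for a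
    by (rule run_blind[OF supm]) (simp add: w_def)
  have ex: "measure_pmf.expectation (run pol (inst D dbar a) w) (\<lambda>h. real (cntn a (map fst h))) =
      measure_pmf.expectation (blind pol w) (\<lambda>xs. real (cntn a xs))" for a
  proof -
    have "measure_pmf.expectation (run pol (inst D dbar a) w) (\<lambda>h. real (cntn a (map fst h))) =
      measure_pmf.expectation (map_pmf (map fst) (run pol (inst D dbar a) w)) (\<lambda>xs. real (cntn a xs))"
      by simp
    then show ?thesis unfolding hb .
  qed
  have fP: "finite (set_pmf (inst D dbar 0 i))" for i using supD[of 0 i] by (meson finite_atMost finite_subset)
  have fb: "finite (set_pmf (blind pol w))"
    unfolding hb[of 0, symmetric] using run_finite[OF vp fP] by simp
  have lb: "length xs = w" if "xs \<in> set_pmf (blind pol w)" for xs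
    using that unfolding hb[of 0, symmetric] by (auto dest: run_support)
  have "measure_pmf.expectation (blind pol w) (\<lambda>xs. real w) \<le>
        measure_pmf.expectation (blind pol w) (\<lambda>xs. real (cntn 0 xs) + real (cntn 1 xs))"
  proof (rule integral_mono_AE)
    show "AE xs in measure_pmf (blind pol w). real w \<le> real (cntn 0 xs) + real (cntn 1 xs)"
      unfolding AE_measure_pmf_iff using lb cntn01 by (metis of_nat_add of_nat_le_iff)
  qed (simp_all add: integrable_measure_pmf_finite fb)
  also have "\<dots> = measure_pmf.expectation (blind pol w) (\<lambda>xs. real (cntn 0 xs)) +
        measure_pmf.expectation (blind pol w) (\<lambda>xs. real (cntn 1 xs))"
    by (rule Bochner_Integration.integral_add) (simp_all add: integrable_measure_pmf_finite fb)
  finally have sum: "real w \<le> measure_pmf.expectation (blind pol w) (\<lambda>xs. real (cntn 0 xs)) +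
        measure_pmf.expectation (blind pol w) (\<lambda>xs. real (cntn 1 xs))" by simp
  obtain a where aK: "a < K" and half: "real w / 2 \<le> measure_pmf.expectation (blind pol w) (\<lambda>xs. real (cntn a xs))"
  proof (cases "real w / 2 \<le> measure_pmf.expectation (blind pol w) (\<lambda>xs. real (cntn 0 xs))")
    case True then show ?thesis using that[of 0] K by simp
  next
    case False then show ?thesis using that[of 1] K sum by simp
  qed
  have "real w / 4 \<le> pseudo_regret K D T (inst D dbar a) pol"
    by (rule regret_bound[OF vp aK D wT]) (unfold ex, rule half)
  then show ?thesis using aK wd by (intro exI[of _ a]) simp
qed

theorem theorem5:
  "\<exists>c>0. \<forall>(K::nat) (D::nat) (T::nat) (dbar::real).
     2 \<le> K \<longrightarrow> 0 < D \<longrightarrow> 0 \<le> dbar \<longrightarrow> dbar \<le> real D / 2 \<longrightarrow> dbar \<le> real T \<longrightarrow>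
     (\<forall>pol. valid_policy K pol \<longrightarrow>
        (\<exists>P. valid_instance K D P \<and> second_largest K (mean_delay P) = dbar \<and>
             pseudo_regret K D T P pol \<ge> c * dbar))"
proof (intro exI[of _ "1/8::real"] conjI allI impI)
  fix K D T :: nat and dbar :: real and pol
  assume K: "2 \<le> K" and D: "0 < D" "0 \<le> dbar" "dbar \<le> real D / 2"
    and T: "dbar \<le> real T" and vp: "valid_policy K pol"
  have vi: "valid_instance K D (inst D dbar a)" for a
    unfolding valid_instance_def using inst_support[OF D, of a] by (fastforce simp: subset_iff)
  show "\<exists>P. valid_instance K D P \<and> second_largest K (mean_delay P) = dbar \<and>
             pseudo_regret K D T P pol \<ge> 1/8 * dbar"
  proof (cases "T = 0")
    case True
    then have "dbar = 0" using T D by simp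
    moreover have "pseudo_regret K D T (inst D dbar 0) pol = 0"
      using True by (simp add: pseudo_regret_def total_reward_def)
    ultimately show ?thesis using vi[of 0] inst_second[OF D, of 0 K] K
      by (intro exI[of _ "inst D dbar 0"]) simp
  next
    case False
    then obtain a where "a < K" "dbar / 8 \<le> pseudo_regret K D T (inst D dbar a) pol"
      using exists_arm[OF vp K D _ T] by auto
    then show ?thesis using vi[of a] inst_second[OF D, of a K] K
      by (intro exI[of _ "inst D dbar a"]) simp
  qed
qed (simp)

end
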